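(* Consider an instance with $n$ agents, $m$ items and binary additive valuations (notation as in the context). For every stable fractional allocation $x$ (items divisible) with profile $(h_1,\dots,h_n)$: (1) $h_i=d$ for each integer $d\ge0$ and each $i\in\mathsf{layer}_d$; (2) $h_i\in[d-1,d]$ for each integer $d\ge1$ and each $i\in\mathsf{layer}^-_d$.
   Context: Agents $[n]$, items $[m]$; each agent $i$ has a set $L_i\subseteq[m]$ of liked items. Indivisible setting: an allocation $\chi=(\chi_1,\dots,\chi_n)$ is a tuple of pairwise disjoint subsets of $[m]$, clean if $\chi_i\subseteq L_i$, max-USW if it maximizes $\sum_i|\chi_i\cap L_i|$; allocations are clean and max-USW. Arc $(i,i')$, $i\ne i'$, if some $o\in\chi_i$ lies in $L_{i'}$; a transfer $u\to v$ is a simple directed path from $u$ to $v$ with at least one arc; narrowing if $|\chi_u|\ge|\chi_v|+2$; stable if no narrowing transfer. For integer $d\ge0$, $\mathsf{layer}_d$ is the set of agents $i$ with $|\chi_i|=d$ in every stable indivisible allocation $\chi$; for integer $d\ge1$, $\mathsf{layer}^-_d$ is the set of agents $i$ with $\{|\chi_i|:\chi\text{ stable indivisible}\}=\{d-1,d\}$. Divisible setting: a fractional allocation is $x=(x_{o,i})$ with $x_{o,i}\ge0$, $\sum_i x_{o,i}\le1$; clean if $x_{o,i}=0$ for $o\notin L_i$; max-USW if it maximizes $\sum_i\sum_{o\in L_i}x_{o,i}$; allocations are clean and max-USW; profile $h_i=\sum_o x_{o,i}$. A transfer $u\to v$: distinct agents $u=i_1,\dots,i_k=v$ ($k\ge2$),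 items $o_l$ with $x_{o_l,i_l}>0$, $o_l\in L_{i_{l+1}}$, amount $0<\Delta\le\min_l x_{o_l,i_l}$, moving $\Delta$ of $o_l$ from $i_l$ to $i_{l+1}$; narrowing if $h_u-\Delta\ge h_v+\Delta$; stable if no narrowing transfer. *)

theory Defs
  imports Complex_Main
begin

(* Agents are 0..<n, items are 0..<m; L i is the set of items liked by agent i. *)

definition ind_alloc :: "nat \<Rightarrow> nat \<Rightarrow> (nat \<Rightarrow> nat set) \<Rightarrow> bool" where
  "ind_alloc n m chi \<longleftrightarrow>
     (\<forall>i<n. chi i \<subseteq> {..<m}) \<and>
     (\<forall>i<n. \<forall>j<n. i \<noteq> j \<longrightarrow> chi i \<inter> chi j = {})"

definition ind_clean :: "nat \<Rightarrow> (nat \<Rightarrow> nat set) \<Rightarrow> (nat \<Rightarrow> nat set) \<Rightarrow> bool" where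
  "ind_clean n L chi \<longleftrightarrow> (\<forall>i<n. chi i \<subseteq> L i)"

definition ind_usw :: "nat \<Rightarrow> (nat \<Rightarrow> nat set) \<Rightarrow> (nat \<Rightarrow> nat set) \<Rightarrow> nat" where
  "ind_usw n L chi = (\<Sum>i<n. card (chi i \<inter> L i))"

definition ind_max_usw :: "nat \<Rightarrow> nat \<Rightarrow> (nat \<Rightarrow> nat set) \<Rightarrow> (nat \<Rightarrow> nat set) \<Rightarrow> bool" where
  "ind_max_usw n m L chi \<longleftrightarrow>
     (\<forall>chi'. ind_alloc n m chi' \<longrightarrow> ind_usw n L chi' \<le> ind_usw n L chi)"

definition ind_arc :: "nat \<Rightarrow> (nat \<Rightarrow> nat set) \<Rightarrow> (nat \<Rightarrow> nat set) \<Rightarrow> nat \<Rightarrow> nat \<Rightarrow> bool" where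
  "ind_arc n L chi i i' \<longleftrightarrow> i < n \<and> i' < n \<and> i \<noteq> i' \<and> (\<exists>ob\<in>chi i. ob \<in> L i')"

definition ind_transfer ::
  "nat \<Rightarrow> (nat \<Rightarrow> nat set) \<Rightarrow> (nat \<Rightarrow> nat set) \<Rightarrow> nat \<Rightarrow> nat \<Rightarrow> nat list \<Rightarrow> bool" where
  "ind_transfer n L chi u v p \<longleftrightarrow>
     distinct p \<and> length p \<ge> 2 \<and> hd p = u \<and> last p = v \<and>
     (\<forall>l. Suc l < length p \<longrightarrow> ind_arc n L chi (p ! l) (p ! Suc l))"

definition ind_narrowing :: "(nat \<Rightarrow> nat set) \<Rightarrow> nat \<Rightarrow> nat \<Rightarrow> bool" where
  "ind_narrowing chi u v \<longleftrightarrow> card (chi u) \<ge> card (chi v) + 2"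

definition ind_stable :: "nat \<Rightarrow> nat \<Rightarrow> (nat \<Rightarrow> nat set) \<Rightarrow> (nat \<Rightarrow> nat set) \<Rightarrow> bool" where
  "ind_stable n m L chi \<longleftrightarrow>
     ind_alloc n m chi \<and> ind_clean n L chi \<and> ind_max_usw n m L chi \<and>
     \<not> (\<exists>u v p. ind_transfer n L chi u v p \<and> ind_narrowing chi u v)"

definition layer :: "nat \<Rightarrow> nat \<Rightarrow> (nat \<Rightarrow> nat set) \<Rightarrow> nat \<Rightarrow> nat set" where
  "layer n m L d = {i. i < n \<and> (\<forall>chi. ind_stable n m L chi \<longrightarrow> card (chi i) = d)}"

definition layer_minus :: "nat \<Rightarrow> nat \<Rightarrow> (nat \<Rightarrow> nat set) \<Rightarrow> nat \<Rightarrow> nat set" where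
  "layer_minus n m L d =
     {i. i < n \<and> {card (chi i) | chi. ind_stable n m L chi} = {d - 1, d}}"

(* x o i = fraction of item o given to agent i *)
definition frac_alloc :: "nat \<Rightarrow> nat \<Rightarrow> (nat \<Rightarrow> nat \<Rightarrow> real) \<Rightarrow> bool" where
  "frac_alloc n m x \<longleftrightarrow>
     (\<forall>ob<m. \<forall>i<n. x ob i \<ge> 0) \<and> (\<forall>ob<m. (\<Sum>i<n. x ob i) \<le> 1)"

definition frac_clean :: "nat \<Rightarrow> nat \<Rightarrow> (nat \<Rightarrow> nat set) \<Rightarrow> (nat \<Rightarrow> nat \<Rightarrow> real) \<Rightarrow> bool" where
  "frac_clean n m L x \<longleftrightarrow> (\<forall>ob<m. \<forall>i<n. ob \<notin> L i \<longrightarrow> x ob i = 0)"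

definition frac_usw :: "nat \<Rightarrow> nat \<Rightarrow> (nat \<Rightarrow> nat set) \<Rightarrow> (nat \<Rightarrow> nat \<Rightarrow> real) \<Rightarrow> real" where
  "frac_usw n m L x = (\<Sum>i<n. \<Sum>ob\<in>L i \<inter> {..<m}. x ob i)"

definition frac_max_usw :: "nat \<Rightarrow> nat \<Rightarrow> (nat \<Rightarrow> nat set) \<Rightarrow> (nat \<Rightarrow> nat \<Rightarrow> real) \<Rightarrow> bool" where
  "frac_max_usw n m L x \<longleftrightarrow>
     (\<forall>x'. frac_alloc n m x' \<longrightarrow> frac_usw n m L x' \<le> frac_usw n m L x)"

definition profile :: "nat \<Rightarrow> (nat \<Rightarrow> nat \<Rightarrow> real) \<Rightarrow> nat \<Rightarrow> real" where
  "profile m x i = (\<Sum>ob<m. x ob i)"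

definition frac_transfer ::
  "nat \<Rightarrow> nat \<Rightarrow> (nat \<Rightarrow> nat set) \<Rightarrow> (nat \<Rightarrow> nat \<Rightarrow> real) \<Rightarrow> nat \<Rightarrow> nat \<Rightarrow>
   nat list \<Rightarrow> nat list \<Rightarrow> real \<Rightarrow> bool" where
  "frac_transfer n m L x u v p os \<Delta> \<longleftrightarrow>
     distinct p \<and> length p \<ge> 2 \<and> hd p = u \<and> last p = v \<and> set p \<subseteq> {..<n} \<and>
     length os = length p - 1 \<and> set os \<subseteq> {..<m} \<and> 0 < \<Delta> \<and>
     (\<forall>l < length os. x (os ! l) (p ! l) > 0 \<and> os ! l \<in> L (p ! Suc l) \<and>
                      \<Delta> \<le> x (os ! l) (p ! l))"

definition frac_narrowing :: "nat \<Rightarrow> (nat \<Rightarrow> nat \<Rightarrow> real) \<Rightarrow> nat \<Rightarrow> nat \<Rightarrow> real \<Rightarrow> bool" where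
  "frac_narrowing m x u v \<Delta> \<longleftrightarrow> profile m x u - \<Delta> \<ge> profile m x v + \<Delta>"

definition frac_stable :: "nat \<Rightarrow> nat \<Rightarrow> (nat \<Rightarrow> nat set) \<Rightarrow> (nat \<Rightarrow> nat \<Rightarrow> real) \<Rightarrow> bool" where
  "frac_stable n m L x \<longleftrightarrow>
     frac_alloc n m x \<and> frac_clean n m L x \<and> frac_max_usw n m L x \<and>
     \<not> (\<exists>u v p os \<Delta>. frac_transfer n m L x u v p os \<Delta> \<and> frac_narrowing m x u v \<Delta>)"

end

theory Submission
  imports Defs
begin


lemma rtranclp_distinct_path:
  assumes "R\<^sup>*\<^sup>* u v"
  shows "\<exists>p. distinct p \<and> p \<noteq> [] \<and> hd p = u \<and> last p = v \<and> successively R p"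
  using assms
proof (induction rule: rtranclp_induct)
  case base
  show ?case by (intro exI[of _ "[u]"]) auto
next
  case (step y z)
  then obtain p where p: "distinct p" "p \<noteq> []" "hd p = u" "last p = y" "successively R p" by blast
  show ?case
  proof (cases "z \<in> set p")
    case True
    then obtain ys zs where pe: "p = ys @ z # zs" by (meson split_list)
    have "p = (ys @ [z]) @ zs" using pe by simp
    then have "successively R (ys @ [z])" using p(5) by (metis successively_append_iff)
    moreover have "distinct (ys @ [z])" using p(1) pe by simp
    moreover have "hd (ys @ [z]) = u" using p(3) pe by (cases ys) auto
    ultimately show ?thesis by (intro exI[of _ "ys @ [z]"]) auto
  next
    case False
    show ?thesis using p False step
      by (intro exI[of _ "p @ [z]"]) (auto simp: successively_append_iff)
  qed
qed

lemma path_from_rtranclp: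
  assumes "R\<^sup>*\<^sup>* u v" "u \<noteq> v"
  shows "\<exists>p. distinct p \<and> length p \<ge> 2 \<and> hd p = u \<and> last p = v \<and> successively R p"
proof -
  obtain p where p: "distinct p" "p \<noteq> []" "hd p = u" "last p = v" "successively R p"
    using rtranclp_distinct_path[OF assms(1)] by blast
  have "length p \<noteq> 1"
  proof
    assume "length p = 1"
    then obtain a where "p = [a]" by (cases p) auto
    then show False using p assms(2) by simp
  qed
  moreover have "length p \<noteq> 0" using p(2) by simp
  ultimately have "length p \<ge> 2" by arith
  then show ?thesis using p by blast
qed

lemma successively_set_bound:
  assumes "successively R p" "length p \<ge> 2" "\<And>a b. R a b \<Longrightarrow> a < n \<and> b < n"
  shows "set p \<subseteq> {..<n}"
proof
  fix a assume "a \<in> set p"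
  then obtain k where k: "k < length p" "p ! k = a" by (meson in_set_conv_nth)
  show "a \<in> {..<n}"
  proof (cases "Suc k < length p")
    case True
    then have "R (p!k) (p!Suc k)" using assms(1) successively_nth by blast
    then show ?thesis using assms(3) k by auto
  next
    case False
    then have "k = Suc (k - 1)" "Suc (k-1) < length p" using k assms(2) by auto
    then have "R (p!(k-1)) (p!k)" using assms(1) successively_nth by metis
    then show ?thesis using assms(3) k by auto
  qed
qed

definition good :: "nat \<Rightarrow> nat \<Rightarrow> (nat \<Rightarrow> nat set) \<Rightarrow> (nat \<Rightarrow> nat set) \<Rightarrow> bool" where
  "good n m L chi \<longleftrightarrow> ind_alloc n m chi \<and> ind_clean n L chi \<and> ind_max_usw n m L chi"

lemma usw_clean:
  assumes "ind_clean n L chi"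
  shows "ind_usw n L chi = (\<Sum>i<n. card (chi i))"
  unfolding ind_usw_def
  by (rule sum.cong) (use assms in \<open>auto simp: ind_clean_def Int_absorb2\<close>)

lemma move:
  assumes "ind_alloc n m chi" "ind_clean n L chi" "u < n" "w < n" "u \<noteq> w" "ob \<in> chi u" "ob \<in> L w"
  defines "chi' \<equiv> chi(u := chi u - {ob}, w := insert ob (chi w))"
  shows "ind_alloc n m chi'" "ind_clean n L chi'"
    "card (chi' u) + 1 = card (chi u)" "card (chi' w) = card (chi w) + 1"
    "\<And>j. j \<noteq> u \<Longrightarrow> j \<noteq> w \<Longrightarrow> chi' j = chi j"
proof -
  have fin: "finite (chi j)" if "j < n" for j
    using assms(1) that unfolding ind_alloc_def by (meson finite_lessThan finite_subset)
  have obm: "ob < m" using assms(1,3,6) unfolding ind_alloc_def by auto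
  have notin: "ob \<notin> chi j" if "j < n" "j \<noteq> u" for j
    using assms(1,3,6) that unfolding ind_alloc_def by blast
  have disjx: False if "i < n" "j < n" "i \<noteq> j" "y \<in> chi i" "y \<in> chi j" for i j y
    using assms(1) that unfolding ind_alloc_def by blast
  show "ind_alloc n m chi'"
    using assms(1) obm notin unfolding ind_alloc_def chi'_def by (auto; meson disjx)
  show "ind_clean n L chi'"
    using assms(2,7) unfolding ind_clean_def chi'_def by auto
  show "card (chi' u) + 1 = card (chi u)"
    using assms(5,6) fin[OF assms(3)] unfolding chi'_def
    by (simp add: card_Suc_Diff1 card_gt_0_iff Suc_pred; metis card_gt_0_iff empty_iff Suc_pred)
  show "card (chi' w) = card (chi w) + 1"
    using notin[OF assms(4)] assms(5) fin[OF assms(4)] unfolding chi'_def by simp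
  show "\<And>j. j \<noteq> u \<Longrightarrow> j \<noteq> w \<Longrightarrow> chi' j = chi j" unfolding chi'_def by simp
qed

lemma shift_aux:
  assumes "ind_alloc n m chi" "ind_clean n L chi"
  shows "distinct (u # q) \<Longrightarrow> q \<noteq> [] \<Longrightarrow> set (u # q) \<subseteq> {..<n} \<Longrightarrow>
    successively (ind_arc n L chi) (u # q) \<Longrightarrow>
    \<exists>chi'. ind_alloc n m chi' \<and> ind_clean n L chi' \<and> (\<forall>j. j \<notin> set (u # q) \<longrightarrow> chi' j = chi j) \<and>
      (\<forall>j. card (chi' j) + (if j = u then 1 else 0) = card (chi j) + (if j = last q then 1 else 0))"
proof (induction q arbitrary: u)
  case Nil
  then show ?case by simp
next
  case (Cons w q')
  have arc: "ind_arc n L chi u w" using Cons.prems(4) by simp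
  then obtain ob where ob: "ob \<in> chi u" "ob \<in> L w" unfolding ind_arc_def by blast
  have un: "u < n" "w < n" "u \<noteq> w" using Cons.prems(1,3) by auto
  show ?case
  proof (cases "q' = []")
    case True
    let ?c = "chi(u := chi u - {ob}, w := insert ob (chi w))"
    note mv = move[OF assms un ob]
    have "\<forall>j. j \<notin> set (u # w # q') \<longrightarrow> ?c j = chi j" using mv(5) by auto
    moreover have "\<forall>j. card (?c j) + (if j = u then 1 else 0) = card (chi j) + (if j = last (w # q') then 1 else 0)"
      using mv(3,4,5) True un by auto
    ultimately show ?thesis using mv(1,2) by blast
  next
    case False
    obtain c2 where c2: "ind_alloc n m c2" "ind_clean n L c2" "\<forall>j. j \<notin> set (w # q') \<longrightarrow> c2 j = chi j"
      "\<forall>j. card (c2 j) + (if j = w then 1 else 0) = card (chi j) + (if j = last q' then 1 else 0)"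
      using Cons.IH[of w] Cons.prems False by (auto simp: successively_Cons)
    have c2u: "c2 u = chi u" using c2(3) Cons.prems(1) by auto
    have ob2: "ob \<in> c2 u" using ob c2u by simp
    let ?c = "c2(u := c2 u - {ob}, w := insert ob (c2 w))"
    note mv = move[OF c2(1,2) un ob2 ob(2)]
    have lw: "last q' \<noteq> w" "last q' \<noteq> u" using Cons.prems(1) False by (auto simp: last_in_set) 
    have "card (?c j) + (if j = u then 1 else 0) = card (chi j) + (if j = last (w # q') then 1 else 0)" for j
    proof -
      consider "j = u" | "j = w" | "j \<noteq> u" "j \<noteq> w" by blast
      then show ?thesis
      proof cases
        case 1 then show ?thesis using mv(3) c2u lw un by simp
      next
        case 2 then show ?thesis using mv(4) c2(4)[rule_format, of w] lw un False by simp
      next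
        case 3 then show ?thesis using mv(5)[of j] c2(4)[rule_format, of j] False by simp
      qed
    qed
    then show ?thesis
      apply (intro exI[of _ ?c] conjI mv(1,2))
      using c2(3) mv(5) by auto
  qed
qed


lemma arc_bound: "ind_arc n L chi a b \<Longrightarrow> a < n \<and> b < n"
  unfolding ind_arc_def by simp

lemma sum_total_change:
  fixes f g :: "nat \<Rightarrow> nat"
  assumes "u < n" "v < n" "\<forall>j. f j + (if j = u then 1 else 0) = g j + (if j = v then 1 else 0)"
  shows "(\<Sum>j<n. f j) = (\<Sum>j<n. g j)"
proof -
  have "(\<Sum>j<n. f j + (if j = u then 1 else 0)) = (\<Sum>j<n. g j + (if j = v then 1 else 0))"
    using assms(3) by (intro sum.cong) auto
  then show ?thesis using assms(1,2) by (simp add: sum.distrib)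
qed

lemma shift_good:
  assumes "good n m L chi" "distinct p" "length p \<ge> 2" "successively (ind_arc n L chi) p"
  shows "\<exists>chi'. good n m L chi' \<and>
      (\<forall>j. card (chi' j) + (if j = hd p then 1 else 0) = card (chi j) + (if j = last p then 1 else 0))"
proof -
  have "length (tl p) \<ge> 1" using assms(3) by simp
  then have "tl p \<noteq> []" by (cases "tl p") auto
  moreover have "p \<noteq> []" using assms(3) by auto
  ultimately
  obtain u q where p: "p = u # q" "q \<noteq> []" by (metis list.collapse)
  have sp: "set p \<subseteq> {..<n}" using successively_set_bound[OF assms(4,3)] arc_bound by blast
  have g: "ind_alloc n m chi" "ind_clean n L chi" "ind_max_usw n m L chi" using assms(1) unfolding good_def by auto
  obtain c where c: "ind_alloc n m c" "ind_clean n L c"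
      "\<forall>j. card (c j) + (if j = u then 1 else 0) = card (chi j) + (if j = last q then 1 else 0)"
    using shift_aux[OF g(1,2), of u q] assms p sp by auto
  have lq: "last q = last p" using p by simp
  have "last p \<in> set p" using p(1) last_in_set by blast
  then have "last p \<in> {..<n}" "u \<in> {..<n}" using sp p(1) by auto
  then have "u < n" "last p < n" by auto
  then have "(\<Sum>j<n. card (c j)) = (\<Sum>j<n. card (chi j))"
    using sum_total_change[of u n "last p" "\<lambda>j. card (c j)" "\<lambda>j. card (chi j)"] c(3) unfolding lq by blast
  then have "ind_usw n L c = ind_usw n L chi" using usw_clean[OF c(2)] usw_clean[OF g(2)] by simp
  then have "ind_max_usw n m L c" using g(3) unfolding ind_max_usw_def by simp
  then have "good n m L c" using c(1,2) unfolding good_def by blast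
  moreover have "hd p = u" using p by simp
  ultimately show ?thesis using c(3) unfolding lq by blast
qed

definition sqs :: "nat \<Rightarrow> (nat \<Rightarrow> nat set) \<Rightarrow> nat" where
  "sqs n chi = (\<Sum>j<n. card (chi j) ^ 2)"

definition SM :: "nat \<Rightarrow> nat \<Rightarrow> (nat \<Rightarrow> nat set) \<Rightarrow> (nat \<Rightarrow> nat set) \<Rightarrow> bool" where
  "SM n m L chi \<longleftrightarrow> good n m L chi \<and> (\<forall>c. good n m L c \<longrightarrow> sqs n chi \<le> sqs n c)"

lemma sum_two:
  fixes f g :: "nat \<Rightarrow> nat"
  assumes "u < n" "v < n" "u \<noteq> v" "\<forall>j. j \<noteq> u \<and> j \<noteq> v \<longrightarrow> f j = g j"
  shows "(\<Sum>j<n. f j) + g u + g v = (\<Sum>j<n. g j) + f u + f v"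
proof -
  have A: "(\<Sum>j<n. h j) = h u + h v + (\<Sum>j\<in>{..<n} - {u} - {v}. h j)" for h :: "nat \<Rightarrow> nat"
  proof -
    have 1: "(\<Sum>j<n. h j) = h u + (\<Sum>j\<in>{..<n}-{u}. h j)" by (rule sum.remove) (use assms in auto)
    have 2: "(\<Sum>j\<in>{..<n}-{u}. h j) = h v + (\<Sum>j\<in>{..<n}-{u}-{v}. h j)" by (rule sum.remove) (use assms in auto)
    show ?thesis using 1 2 by simp
  qed
  have B: "(\<Sum>j\<in>{..<n} - {u} - {v}. f j) = (\<Sum>j\<in>{..<n} - {u} - {v}. g j)"
    using assms(4) by (intro sum.cong) auto
  show ?thesis using A[of f] A[of g] B by simp
qed

lemma shift_sqs:
  assumes "good n m L chi" "distinct p" "length p \<ge> 2" "successively (ind_arc n L chi) p"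
  shows "\<exists>chi'. good n m L chi' \<and> card (chi' (hd p)) + 1 = card (chi (hd p)) \<and>
     card (chi' (last p)) = card (chi (last p)) + 1 \<and>
     sqs n chi' + card (chi (hd p))^2 + card (chi (last p))^2
       = sqs n chi + card (chi' (hd p))^2 + card (chi' (last p))^2"
proof -
  obtain c where c: "good n m L c"
     "\<forall>j. card (c j) + (if j = hd p then 1 else 0) = card (chi j) + (if j = last p then 1 else 0)"
    using shift_good[OF assms] by blast
  have sp: "set p \<subseteq> {..<n}" using successively_set_bound[OF assms(4,3)] arc_bound by blast
  have ne: "p \<noteq> []" using assms(3) by auto
  have hl: "hd p \<noteq> last p"
  proof
    assume "hd p = last p"
    moreover have "hd p = p ! 0" "last p = p ! (length p - 1)" using ne by (auto simp: hd_conv_nth last_conv_nth)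
    ultimately have "p ! 0 = p ! (length p - 1)" by simp
    moreover have i0: "0 < length p" and i1: "length p - 1 < length p" using assms(3) by auto
    ultimately have "0 = length p - 1" using nth_eq_iff_index_eq[OF assms(2) i0 i1] by simp
    then show False using assms(3) by simp
  qed
  have "hd p \<in> set p" "last p \<in> set p" using ne hd_in_set last_in_set by blast+
  then have b: "hd p < n" "last p < n" using sp by auto
  have eqj: "card (c j) = card (chi j)" if "j \<noteq> hd p" "j \<noteq> last p" for j
    using c(2)[rule_format, of j] that by simp
  have "sqs n c + card (chi (hd p))^2 + card (chi (last p))^2
       = sqs n chi + card (c (hd p))^2 + card (c (last p))^2"
    unfolding sqs_def
    by (rule sum_two[OF b hl]) (use eqj in auto)
  moreover have "card (c (hd p)) + 1 = card (chi (hd p))" using c(2)[rule_format, of "hd p"] hl by simp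
  moreover have "card (c (last p)) = card (chi (last p)) + 1" using c(2)[rule_format, of "last p"] hl by simp
  ultimately show ?thesis using c(1) by blast
qed

lemma transfer_iff:
  "ind_transfer n L chi u v p \<longleftrightarrow> distinct p \<and> length p \<ge> 2 \<and> hd p = u \<and> last p = v \<and>
      successively (ind_arc n L chi) p"
  unfolding ind_transfer_def successively_conv_nth by blast

lemma SM_stable:
  assumes "SM n m L chi"
  shows "ind_stable n m L chi"
proof -
  have g: "good n m L chi" using assms unfolding SM_def by auto
  have "\<not> ind_narrowing chi u v" if t: "ind_transfer n L chi u v p" for u v p
  proof
    assume nar: "ind_narrowing chi u v"
    have tp: "distinct p" "length p \<ge> 2" "hd p = u" "last p = v" "successively (ind_arc n L chi) p"
      using t transfer_iff by auto
    obtain c where c: "good n m L c" "card (c u) + 1 = card (chi u)" "card (c v) = card (chi v) + 1"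
      "sqs n c + card (chi u)^2 + card (chi v)^2 = sqs n chi + card (c u)^2 + card (c v)^2"
      using shift_sqs[OF g tp(1,2,5)] tp(3,4) by auto
    have le: "sqs n chi \<le> sqs n c" using assms c(1) unfolding SM_def by auto
    obtain a b where ab: "card (chi u) = a + 1" "card (c u) = a" "card (chi v) = b" "card (c v) = b + 1"
      using c(2,3) by auto
    have "b + 1 \<le> a" using nar ab unfolding ind_narrowing_def by simp
    then have "(b+1)^2 + a^2 < (a+1)^2 + b^2"
      unfolding power2_sum by simp
    then show False using c(4) le ab by simp
  qed
  then show ?thesis using g unfolding ind_stable_def good_def by blast
qed

lemma good_exists: "\<exists>chi. good n m L chi"
proof -
  let ?V = "{ind_usw n L c | c. ind_alloc n m c}"
  have bound: "ind_usw n L c \<le> n * m" if "ind_alloc n m c" for c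
  proof -
    have "card (c i \<inter> L i) \<le> m" if "i < n" for i
    proof -
      have "c i \<inter> L i \<subseteq> {..<m}" using \<open>ind_alloc n m c\<close> that unfolding ind_alloc_def by auto
      then show ?thesis using card_mono[of "{..<m}"] by fastforce
    qed
    then have "ind_usw n L c \<le> (\<Sum>i<n. m)" unfolding ind_usw_def by (intro sum_mono) auto
    then show ?thesis by simp
  qed
  have fin: "finite ?V" by (rule finite_subset[of _ "{..n*m}"]) (use bound in auto)
  have e: "ind_alloc n m (\<lambda>_. {})" unfolding ind_alloc_def by auto
  then have ne: "?V \<noteq> {}" by blast
  obtain c0 where c0: "ind_alloc n m c0" "ind_usw n L c0 = Max ?V"
    using Max_in[OF fin ne] by auto
  have mx: "ind_max_usw n m L c0" unfolding ind_max_usw_def using c0 Max_ge[OF fin] by auto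
  let ?c = "\<lambda>i. c0 i \<inter> L i"
  have "ind_alloc n m ?c" using c0(1) unfolding ind_alloc_def by blast
  moreover have "ind_clean n L ?c" unfolding ind_clean_def by auto
  moreover have "ind_usw n L ?c = ind_usw n L c0" unfolding ind_usw_def by (simp add: Int_assoc)
  moreover have "ind_max_usw n m L ?c" using mx calculation(3) unfolding ind_max_usw_def by simp
  ultimately show ?thesis unfolding good_def by blast
qed

lemma SM_exists: "\<exists>chi. SM n m L chi"
proof -
  obtain c where "good n m L c" using good_exists by blast
  then obtain chi where "good n m L chi" "\<forall>c. good n m L c \<longrightarrow> sqs n chi \<le> sqs n c"
    using ex_has_least_nat[of "good n m L" c "sqs n"] by blast
  then show ?thesis unfolding SM_def by blast
qed


lemma xpath:
  assumes "frac_stable n m L x" "distinct p" "length p \<ge> 2" "set p \<subseteq> {..<n}"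
    "successively (\<lambda>a b. \<exists>ob<m. 0 < x ob a \<and> ob \<in> L b) p"
  shows "profile m x (hd p) \<le> profile m x (last p)"
proof (rule ccontr)
  assume "\<not> ?thesis"
  then have hv: "profile m x (last p) < profile m x (hd p)" by simp
  define os where "os = map (\<lambda>l. SOME ob. ob<m \<and> 0 < x ob (p!l) \<and> ob \<in> L (p!Suc l)) [0..<length p - 1]"
  have los: "length os = length p - 1" unfolding os_def by simp
  have os: "os!l < m \<and> 0 < x (os!l) (p!l) \<and> os!l \<in> L (p!Suc l)" if "l < length os" for l
  proof -
    have "Suc l < length p" using that los by simp
    then have "\<exists>ob<m. 0 < x ob (p!l) \<and> ob \<in> L (p!Suc l)" using assms(5) successively_nth by fast
    then have "(SOME ob. ob<m \<and> 0 < x ob (p!l) \<and> ob \<in> L (p!Suc l)) < m \<and>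
        0 < x (SOME ob. ob<m \<and> 0 < x ob (p!l) \<and> ob \<in> L (p!Suc l)) (p!l) \<and>
        (SOME ob. ob<m \<and> 0 < x ob (p!l) \<and> ob \<in> L (p!Suc l)) \<in> L (p!Suc l)"
      by (rule someI_ex[where P = "\<lambda>ob. ob<m \<and> 0 < x ob (p!l) \<and> ob \<in> L (p!Suc l)"]) 
    moreover have "os ! l = (SOME ob. ob<m \<and> 0 < x ob (p!l) \<and> ob \<in> L (p!Suc l))"
      using that los unfolding os_def by simp
    ultimately show ?thesis by simp
  qed
  define S where "S = (\<lambda>l. x (os!l) (p!l)) ` {..<length os}"
  have finS: "finite S" unfolding S_def by simp
  have "0 \<in> {..<length os}" using los assms(3) by simp
  then have neS: "S \<noteq> {}" unfolding S_def by blast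
  define M where "M = Min S"
  have Mpos: "0 < M" unfolding M_def using Min_in[OF finS neS] os unfolding S_def by auto
  have Mle: "M \<le> x (os!l) (p!l)" if "l < length os" for l
    unfolding M_def S_def using that by (intro Min_le) auto
  define D where "D = min M ((profile m x (hd p) - profile m x (last p)) / 2)"
  have Dpos: "0 < D" unfolding D_def using Mpos hv by simp
  have "set os \<subseteq> {..<m}" using os by (auto simp: in_set_conv_nth)
  then have "frac_transfer n m L x (hd p) (last p) p os D"
    unfolding frac_transfer_def using assms(2,3,4) los Dpos os Mle
    by (auto simp: D_def intro: min.coboundedI1)
  moreover have "D \<le> (profile m x (hd p) - profile m x (last p)) / 2" unfolding D_def by (rule min.cobounded2)
  then have "2 * D \<le> profile m x (hd p) - profile m x (last p)" by simp
  then have "frac_narrowing m x (hd p) (last p) D"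
    unfolding frac_narrowing_def by linarith
  ultimately show False using assms(1) unfolding frac_stable_def by blast
qed

definition alt :: "nat \<Rightarrow> nat \<Rightarrow> (nat \<Rightarrow> nat \<Rightarrow> real) \<Rightarrow> (nat \<Rightarrow> nat set) \<Rightarrow> nat \<Rightarrow> nat \<Rightarrow> bool" where
  "alt n m x chi a b \<longleftrightarrow> a < n \<and> b < n \<and> (\<exists>ob<m. 0 < x ob a \<and> ob \<notin> chi a \<and> ob \<in> chi b)"

lemma alloc_fin:
  assumes "ind_alloc n m chi" "j < n"
  shows "finite (chi j)" "chi j \<subseteq> {..<m}"
  using assms unfolding ind_alloc_def by (auto intro: finite_subset)

lemma alloc_disj:
  assumes "ind_alloc n m chi" "j < n" "j' < n" "j \<noteq> j'" "ob \<in> chi j"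
  shows "ob \<notin> chi j'"
  using assms unfolding ind_alloc_def by blast

lemma sum_upd_nat:
  fixes f g :: "nat \<Rightarrow> nat"
  assumes "j < n" "\<forall>i. i \<noteq> j \<longrightarrow> f i = g i"
  shows "(\<Sum>i<n. f i) + g j = (\<Sum>i<n. g i) + f j"
proof -
  have 1: "(\<Sum>i<n. h i) = h j + (\<Sum>i\<in>{..<n}-{j}. h i)" for h :: "nat \<Rightarrow> nat"
    by (rule sum.remove) (use assms in auto)
  have 2: "(\<Sum>i\<in>{..<n}-{j}. f i) = (\<Sum>i\<in>{..<n}-{j}. g i)" using assms(2) by (intro sum.cong) auto
  show ?thesis using 1[of f] 1[of g] 2 by simp
qed

lemma fwd:
  assumes "frac_alloc n m x" "frac_clean n m L x" "ind_alloc n m chi" "ind_max_usw n m L chi" "i < n"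
     "real (card (chi i)) < profile m x i"
  shows "\<exists>k. k < n \<and> profile m x k < real (card (chi k)) \<and> (alt n m x chi)\<^sup>*\<^sup>* i k"
proof (rule ccontr)
  assume nk: "\<not> ?thesis"
  define R where "R = {j. j < n \<and> (alt n m x chi)\<^sup>*\<^sup>* i j}"
  define Q where "Q = (\<Union>j\<in>R. chi j)"
  have Rsub: "R \<subseteq> {..<n}" unfolding R_def by auto
  have finR: "finite R" using Rsub finite_subset by blast
  have iR: "i \<in> R" unfolding R_def using assms(5) by auto
  have Qsub: "Q \<subseteq> {..<m}" unfolding Q_def using alloc_fin[OF assms(3)] Rsub by blast
  have xnn: "0 \<le> x ob j" if "ob < m" "j < n" for ob j using assms(1) that unfolding frac_alloc_def by auto
  have claim: "ob \<in> Q" if jR: "j \<in> R" and obm: "ob < m" and pos: "0 < x ob j" for j ob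
  proof (rule ccontr)
    assume obQ: "ob \<notin> Q"
    have jn: "j < n" using jR Rsub by auto
    have nj: "ob \<notin> chi j" using obQ jR unfolding Q_def by auto
    have none: "ob \<notin> chi j'" if "j' < n" for j'
    proof
      assume "ob \<in> chi j'"
      then have "alt n m x chi j j'" unfolding alt_def using jn that obm pos nj by blast
      then have "j' \<in> R" using jR that unfolding R_def by auto
      then show False using obQ \<open>ob \<in> chi j'\<close> unfolding Q_def by auto
    qed
    have obL: "ob \<in> L j" using assms(2) obm jn pos unfolding frac_clean_def by force
    define c where "c = chi(j := insert ob (chi j))"
    have ca: "ind_alloc n m c"
      using assms(3) none obm jn unfolding ind_alloc_def c_def by auto
    have "card (c j \<inter> L j) = card (chi j \<inter> L j) + 1"
      using nj obL alloc_fin[OF assms(3) jn] unfolding c_def by simp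
    then have "ind_usw n L c + card (chi j \<inter> L j) = ind_usw n L chi + card (c j \<inter> L j)"
      unfolding ind_usw_def by (intro sum_upd_nat[OF jn]) (auto simp: c_def)
    then have "ind_usw n L c > ind_usw n L chi" using \<open>card (c j \<inter> L j) = _\<close> by simp
    then show False using assms(4) ca unfolding ind_max_usw_def by force
  qed
  have f1: "\<forall>j\<in>R. finite (chi j)" using alloc_fin[OF assms(3)] Rsub by blast
  have f2: "\<forall>j\<in>R. \<forall>j'\<in>R. j \<noteq> j' \<longrightarrow> chi j \<inter> chi j' = {}" using assms(3) Rsub unfolding ind_alloc_def by blast
  have cardQ: "card (\<Union>j\<in>R. chi j) = (\<Sum>j\<in>R. card (chi j))" by (rule card_UN_disjoint[OF finR f1 f2])
  have "(\<Sum>j\<in>R. profile m x j) = (\<Sum>j\<in>R. \<Sum>ob\<in>Q. x ob j)"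
  proof (rule sum.cong[OF refl])
    fix j assume jR: "j \<in> R"
    then have jn: "j < n" using Rsub by auto
    show "profile m x j = (\<Sum>ob\<in>Q. x ob j)" unfolding profile_def
    proof (rule sum.mono_neutral_right)
      show "finite {..<m}" by simp
      show "Q \<subseteq> {..<m}" by (rule Qsub)
      show "\<forall>ob\<in>{..<m} - Q. x ob j = 0"
        using claim[OF jR] xnn jn by (metis DiffE lessThan_iff order_le_less)
    qed
  qed
  also have "\<dots> = (\<Sum>ob\<in>Q. \<Sum>j\<in>R. x ob j)" by (rule sum.swap)
  also have "\<dots> \<le> (\<Sum>ob\<in>Q. \<Sum>j<n. x ob j)"
    by (intro sum_mono sum_mono2) (use Rsub Qsub xnn in auto)
  also have "\<dots> \<le> (\<Sum>ob\<in>Q. 1)"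
    by (intro sum_mono) (use Qsub assms(1) in \<open>auto simp: frac_alloc_def\<close>)
  also have "\<dots> = real (card Q)" by simp
  finally have le0: "(\<Sum>j\<in>R. profile m x j) \<le> real (card Q)" .
  have le: "(\<Sum>j\<in>R. profile m x j) \<le> (\<Sum>j\<in>R. real (card (chi j)))"
    using le0 cardQ unfolding Q_def by simp
  have "\<forall>k\<in>R. real (card (chi k)) \<le> profile m x k" using nk unfolding R_def by force
  then have "(\<Sum>j\<in>R. real (card (chi j))) < (\<Sum>j\<in>R. profile m x j)"
    by (intro sum_strict_mono_ex1[OF finR]) (use iR assms(6) in auto)
  then show False using le by simp
qed


lemma full_alloc:
  assumes "frac_alloc n m x" "frac_max_usw n m L x" "ob < m" "j' < n" "ob \<in> L j'"
  shows "(\<Sum>j<n. x ob j) = 1"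
proof (rule ccontr)
  assume ne: "(\<Sum>j<n. x ob j) \<noteq> 1"
  define s where "s = (\<Sum>j<n. x ob j)"
  have "s \<le> 1" using assms(1,3) unfolding frac_alloc_def s_def by auto
  then have s1: "s < 1" using ne unfolding s_def by simp
  define y where "y = (\<lambda>o' a. x o' a + (if o' = ob \<and> a = j' then 1 - s else 0))"
  have "frac_alloc n m y"
  proof -
    have "\<forall>o'<m. \<forall>i<n. y o' i \<ge> 0" using assms(1) s1 unfolding frac_alloc_def y_def by auto
    moreover have "(\<Sum>i<n. y o' i) \<le> 1" if "o' < m" for o'
    proof (cases "o' = ob")
      case True
      have "(\<Sum>i<n. y o' i) = s + (\<Sum>i<n. if i = j' then 1 - s else 0)"
        unfolding y_def s_def using True by (simp add: sum.distrib)
      also have "\<dots> = 1" using assms(4) by simp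
      finally show ?thesis by simp
    next
      case False
      then show ?thesis using assms(1) that unfolding frac_alloc_def y_def by auto
    qed
    ultimately show ?thesis unfolding frac_alloc_def by auto
  qed
  moreover have "frac_usw n m L y = frac_usw n m L x + (1 - s)"
  proof -
    have "frac_usw n m L y = frac_usw n m L x +
       (\<Sum>i<n. \<Sum>o'\<in>L i \<inter> {..<m}. if o' = ob \<and> i = j' then 1 - s else 0)"
      unfolding frac_usw_def y_def by (simp add: sum.distrib)
    also have "(\<Sum>i<n. \<Sum>o'\<in>L i \<inter> {..<m}. if o' = ob \<and> i = j' then 1 - s else 0)
        = (\<Sum>i<n. if i = j' then 1 - s else 0)"
    proof (rule sum.cong[OF refl])
      fix i assume "i \<in> {..<n}"
      show "(\<Sum>o'\<in>L i \<inter> {..<m}. if o' = ob \<and> i = j' then 1 - s else 0) = (if i = j' then 1 - s else 0)"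
      proof (cases "i = j'")
        case True
        have fin: "finite (L i \<inter> {..<m})" by simp
        have "ob \<in> L i \<inter> {..<m}" using True assms(3,5) by simp
        then show ?thesis using True sum.delta[OF fin, of ob "\<lambda>_. 1 - s"] by simp
      qed simp
    qed
    also have "\<dots> = 1 - s" using assms(4) by simp
    finally show ?thesis .
  qed
  ultimately show False using assms(2) s1 unfolding frac_max_usw_def by force
qed

lemma bwd:
  assumes "frac_alloc n m x" "frac_clean n m L x" "frac_max_usw n m L x"
     "ind_alloc n m chi" "ind_clean n L chi" "i < n"
     "profile m x i < real (card (chi i))"
  shows "\<exists>k. k < n \<and> real (card (chi k)) < profile m x k \<and> (alt n m x chi)\<^sup>*\<^sup>* k i"
proof (rule ccontr)
  assume nk: "\<not> ?thesis"
  define R where "R = {j. j < n \<and> (alt n m x chi)\<^sup>*\<^sup>* j i}"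
  define Q where "Q = (\<Union>j\<in>R. chi j)"
  have Rsub: "R \<subseteq> {..<n}" unfolding R_def by auto
  have finR: "finite R" using Rsub finite_subset by blast
  have iR: "i \<in> R" unfolding R_def using assms(6) by auto
  have Qsub: "Q \<subseteq> {..<m}" unfolding Q_def using alloc_fin[OF assms(4)] Rsub by blast
  have xnn: "0 \<le> x ob j" if "ob < m" "j < n" for ob j using assms(1) that unfolding frac_alloc_def by auto
  have claim: "(\<Sum>j\<in>R. x ob j) = 1" if obQ: "ob \<in> Q" for ob
  proof -
    obtain j' where j': "j' \<in> R" "ob \<in> chi j'" using obQ unfolding Q_def by auto
    have j'n: "j' < n" using j' Rsub by auto
    have obm: "ob < m" using obQ Qsub by auto
    have obL: "ob \<in> L j'" using assms(5) j'n j' unfolding ind_clean_def by auto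
    have zero: "x ob j = 0" if "j \<in> {..<n} - R" for j
    proof (rule ccontr)
      assume "x ob j \<noteq> 0"
      then have pos: "0 < x ob j" using xnn obm that by force
      have jn: "j < n" "j \<noteq> j'" using that j' by auto
      have "ob \<notin> chi j" using alloc_disj[OF assms(4) j'n jn(1)] jn(2) j'(2) by metis
      then have "alt n m x chi j j'" unfolding alt_def using jn j'n obm pos j' by blast
      then have "j \<in> R" using j' jn unfolding R_def by (auto intro: converse_rtranclp_into_rtranclp)
      then show False using that by simp
    qed
    have "(\<Sum>j\<in>R. x ob j) = (\<Sum>j<n. x ob j)"
      by (rule sum.mono_neutral_left) (use Rsub zero in auto)
    also have "\<dots> = 1" by (rule full_alloc[OF assms(1,3) obm j'n obL])
    finally show ?thesis .
  qed
  have f1: "\<forall>j\<in>R. finite (chi j)" using alloc_fin[OF assms(4)] Rsub by blast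
  have f2: "\<forall>j\<in>R. \<forall>j'\<in>R. j \<noteq> j' \<longrightarrow> chi j \<inter> chi j' = {}" using assms(4) Rsub unfolding ind_alloc_def by blast
  have cardQ: "card (\<Union>j\<in>R. chi j) = (\<Sum>j\<in>R. card (chi j))" by (rule card_UN_disjoint[OF finR f1 f2])
  have "real (card Q) = (\<Sum>ob\<in>Q. (1::real))" by simp
  also have "\<dots> = (\<Sum>ob\<in>Q. \<Sum>j\<in>R. x ob j)" using claim by simp
  also have "\<dots> = (\<Sum>j\<in>R. \<Sum>ob\<in>Q. x ob j)" by (rule sum.swap)
  also have "\<dots> \<le> (\<Sum>j\<in>R. profile m x j)" unfolding profile_def
    by (intro sum_mono sum_mono2) (use Rsub Qsub xnn in auto)
  finally have le0: "real (card Q) \<le> (\<Sum>j\<in>R. profile m x j)" .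
  have le: "(\<Sum>j\<in>R. real (card (chi j))) \<le> (\<Sum>j\<in>R. profile m x j)"
    using le0 cardQ unfolding Q_def by simp
  have "\<forall>k\<in>R. profile m x k \<le> real (card (chi k))" using nk unfolding R_def by force
  then have "(\<Sum>j\<in>R. profile m x j) < (\<Sum>j\<in>R. real (card (chi j)))"
    by (intro sum_strict_mono_ex1[OF finR]) (use iR assms(7) in auto)
  then show False using le by simp
qed


lemma altpath:
  assumes "frac_clean n m L x" "ind_clean n L chi" "(alt n m x chi)\<^sup>*\<^sup>* a b" "a \<noteq> b"
  shows "\<exists>p. distinct p \<and> length p \<ge> 2 \<and> hd p = a \<and> last p = b \<and> set p \<subseteq> {..<n} \<and>
     successively (\<lambda>a b. \<exists>ob<m. 0 < x ob a \<and> ob \<in> L b) p \<and>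
     successively (ind_arc n L chi) (rev p)"
proof -
  obtain p where p: "distinct p" "length p \<ge> 2" "hd p = a" "last p = b" "successively (alt n m x chi) p"
    using path_from_rtranclp[OF assms(3,4)] by blast
  have sp: "set p \<subseteq> {..<n}" using successively_set_bound[OF p(5) p(2)] unfolding alt_def by blast
  have s1: "successively (\<lambda>a b. \<exists>ob<m. 0 < x ob a \<and> ob \<in> L b) p"
    using p(5) by (rule successively_mono) (use assms(2) in \<open>auto simp: alt_def ind_clean_def\<close>)
  have "successively (\<lambda>a b. ind_arc n L chi b a) p"
  proof (rule successively_mono[OF p(5)])
    fix a b assume "alt n m x chi a b"
    then obtain ob where ob: "a < n" "b < n" "ob < m" "0 < x ob a" "ob \<notin> chi a" "ob \<in> chi b"
      unfolding alt_def by blast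
    have "ob \<in> L a" using assms(1) ob unfolding frac_clean_def by force
    moreover have "a \<noteq> b" using ob by auto
    ultimately show "ind_arc n L chi b a" unfolding ind_arc_def using ob by auto
  qed
  then have s2: "successively (ind_arc n L chi) (rev p)" by simp
  show ?thesis using p sp s1 s2 by blast
qed

lemma chi_path_bound:
  assumes "ind_stable n m L chi" "distinct q" "length q \<ge> 2" "successively (ind_arc n L chi) q"
  shows "\<not> card (chi (last q)) + 2 \<le> card (chi (hd q))"
proof
  assume "card (chi (last q)) + 2 \<le> card (chi (hd q))"
  then have "ind_narrowing chi (hd q) (last q)" unfolding ind_narrowing_def by simp
  moreover have "ind_transfer n L chi (hd q) (last q) q" using assms(2,3,4) transfer_iff by blast
  ultimately show False using assms(1) unfolding ind_stable_def by blast
qed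

lemma fs_parts:
  assumes "frac_stable n m L x"
  shows "frac_alloc n m x" "frac_clean n m L x" "frac_max_usw n m L x"
  using assms unfolding frac_stable_def by auto

lemma is_parts:
  assumes "ind_stable n m L chi"
  shows "ind_alloc n m chi" "ind_clean n L chi" "ind_max_usw n m L chi" "good n m L chi"
  using assms unfolding ind_stable_def good_def by auto

lemma P1:
  assumes "frac_stable n m L x" "ind_stable n m L chi" "i < n"
  shows "profile m x i < real (card (chi i)) + 1" "real (card (chi i)) < profile m x i + 1"
proof -
  note X = fs_parts[OF assms(1)] and C = is_parts[OF assms(2)]
  show "profile m x i < real (card (chi i)) + 1"
  proof (cases "real (card (chi i)) < profile m x i")
    case True
    obtain k where k: "k < n" "profile m x k < real (card (chi k))" "(alt n m x chi)\<^sup>*\<^sup>* i k"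
      using fwd[OF X(1,2) C(1,3) assms(3) True] by blast
    have "k \<noteq> i" using k(2) True by auto
    then obtain p where p: "distinct p" "length p \<ge> 2" "hd p = i" "last p = k" "set p \<subseteq> {..<n}"
      "successively (\<lambda>a b. \<exists>ob<m. 0 < x ob a \<and> ob \<in> L b) p" "successively (ind_arc n L chi) (rev p)"
      using altpath[OF X(2) C(2) k(3)] by blast
    have "profile m x i \<le> profile m x k" using xpath[OF assms(1) p(1,2,5,6)] p(3,4) by simp
    moreover have "\<not> card (chi i) + 2 \<le> card (chi k)"
      using chi_path_bound[OF assms(2) _ _ p(7)] p(1,2,3,4) unfolding hd_rev last_rev by simp
    ultimately show ?thesis using k(2) by linarith
  qed simp
  show "real (card (chi i)) < profile m x i + 1"
  proof (cases "profile m x i < real (card (chi i))")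
    case True
    obtain k where k: "k < n" "real (card (chi k)) < profile m x k" "(alt n m x chi)\<^sup>*\<^sup>* k i"
      using bwd[OF X(1,2,3) C(1,2) assms(3) True] by blast
    have "k \<noteq> i" using k(2) True by auto
    then obtain p where p: "distinct p" "length p \<ge> 2" "hd p = k" "last p = i" "set p \<subseteq> {..<n}"
      "successively (\<lambda>a b. \<exists>ob<m. 0 < x ob a \<and> ob \<in> L b) p" "successively (ind_arc n L chi) (rev p)"
      using altpath[OF X(2) C(2) k(3)] by blast
    have "profile m x k \<le> profile m x i" using xpath[OF assms(1) p(1,2,5,6)] p(3,4) by simp
    moreover have "\<not> card (chi k) + 2 \<le> card (chi i)"
      using chi_path_bound[OF assms(2) _ _ p(7)] p(1,2,3,4) unfolding hd_rev last_rev by simp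
    ultimately show ?thesis using k(2) by linarith
  qed simp
qed

lemma shift_up:
  assumes "frac_stable n m L x" "SM n m L chi" "i < n" "real (card (chi i)) < profile m x i"
  shows "\<exists>c. SM n m L c \<and> card (c i) = card (chi i) + 1"
proof -
  have st: "ind_stable n m L chi" using SM_stable[OF assms(2)] .
  note X = fs_parts[OF assms(1)] and C = is_parts[OF st]
  obtain k where k: "k < n" "profile m x k < real (card (chi k))" "(alt n m x chi)\<^sup>*\<^sup>* i k"
    using fwd[OF X(1,2) C(1,3) assms(3,4)] by blast
  have "k \<noteq> i" using k(2) assms(4) by auto
  then obtain p where p: "distinct p" "length p \<ge> 2" "hd p = i" "last p = k" "set p \<subseteq> {..<n}"
    "successively (\<lambda>a b. \<exists>ob<m. 0 < x ob a \<and> ob \<in> L b) p" "successively (ind_arc n L chi) (rev p)"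
    using altpath[OF X(2) C(2) k(3)] by blast
  have "profile m x i \<le> profile m x k" using xpath[OF assms(1) p(1,2,5,6)] p(3,4) by simp
  moreover have "\<not> card (chi i) + 2 \<le> card (chi k)"
    using chi_path_bound[OF st _ _ p(7)] p(1,2,3,4) unfolding hd_rev last_rev by simp
  ultimately have ck: "card (chi k) = card (chi i) + 1" using k(2) assms(4) by linarith
  have "\<exists>c. good n m L c \<and> card (c k) + 1 = card (chi k) \<and> card (c i) = card (chi i) + 1 \<and>
     sqs n c + card (chi k)^2 + card (chi i)^2 = sqs n chi + card (c k)^2 + card (c i)^2"
    using shift_sqs[OF C(4), of "rev p"] p(1,2,3,4,7) unfolding hd_rev last_rev by simp
  then obtain c where c: "good n m L c" "card (c k) + 1 = card (chi k)" "card (c i) = card (chi i) + 1"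
     "sqs n c + card (chi k)^2 + card (chi i)^2 = sqs n chi + card (c k)^2 + card (c i)^2" by blast
  have "card (c k) = card (chi i)" using c(2) ck by simp
  then have "sqs n c = sqs n chi" using c(3,4) ck by simp
  then have "SM n m L c" using c(1) assms(2) unfolding SM_def by simp
  then show ?thesis using c(3) by blast
qed

lemma shift_down:
  assumes "frac_stable n m L x" "SM n m L chi" "i < n" "profile m x i < real (card (chi i))"
  shows "\<exists>c. SM n m L c \<and> card (c i) + 1 = card (chi i)"
proof -
  have st: "ind_stable n m L chi" using SM_stable[OF assms(2)] .
  note X = fs_parts[OF assms(1)] and C = is_parts[OF st]
  obtain k where k: "k < n" "real (card (chi k)) < profile m x k" "(alt n m x chi)\<^sup>*\<^sup>* k i"
    using bwd[OF X(1,2,3) C(1,2) assms(3,4)] by blast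
  have "k \<noteq> i" using k(2) assms(4) by auto
  then obtain p where p: "distinct p" "length p \<ge> 2" "hd p = k" "last p = i" "set p \<subseteq> {..<n}"
    "successively (\<lambda>a b. \<exists>ob<m. 0 < x ob a \<and> ob \<in> L b) p" "successively (ind_arc n L chi) (rev p)"
    using altpath[OF X(2) C(2) k(3)] by blast
  have "profile m x k \<le> profile m x i" using xpath[OF assms(1) p(1,2,5,6)] p(3,4) by simp
  moreover have "\<not> card (chi k) + 2 \<le> card (chi i)"
    using chi_path_bound[OF st _ _ p(7)] p(1,2,3,4) unfolding hd_rev last_rev by simp
  ultimately have ck: "card (chi i) = card (chi k) + 1" using k(2) assms(4) by linarith
  have "\<exists>c. good n m L c \<and> card (c i) + 1 = card (chi i) \<and> card (c k) = card (chi k) + 1 \<and>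
     sqs n c + card (chi i)^2 + card (chi k)^2 = sqs n chi + card (c i)^2 + card (c k)^2"
    using shift_sqs[OF C(4), of "rev p"] p(1,2,3,4,7) unfolding hd_rev last_rev by simp
  then obtain c where c: "good n m L c" "card (c i) + 1 = card (chi i)" "card (c k) = card (chi k) + 1"
     "sqs n c + card (chi i)^2 + card (chi k)^2 = sqs n chi + card (c i)^2 + card (c k)^2" by blast
  have "card (c i) = card (chi k)" using c(2) ck by simp
  then have "sqs n c = sqs n chi" using c(3,4) ck by simp
  then have "SM n m L c" using c(1) assms(2) unfolding SM_def by simp
  then show ?thesis using c(2) by blast
qed

theorem lemma7:
  fixes n m :: nat and L :: "nat \<Rightarrow> nat set" and x :: "nat \<Rightarrow> nat \<Rightarrow> real"
  assumes "\<forall>i<n. L i \<subseteq> {..<m}"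
    and "frac_stable n m L x"
  shows "(\<forall>d i. i \<in> layer n m L d \<longrightarrow> profile m x i = real d) \<and>
         (\<forall>d i. d \<ge> 1 \<longrightarrow> i \<in> layer_minus n m L d \<longrightarrow>
                real d - 1 \<le> profile m x i \<and> profile m x i \<le> real d)"
proof -
  obtain c0 where c0: "SM n m L c0" using SM_exists by blast
  have st0: "ind_stable n m L c0" using SM_stable[OF c0] .
  have part1: "profile m x i = real d" if "i \<in> layer n m L d" for d i
  proof -
    have i: "i < n" "\<forall>chi. ind_stable n m L chi \<longrightarrow> card (chi i) = d"
      using that unfolding layer_def by auto
    have cd: "card (c0 i) = d" using i st0 by blast
    have "\<not> real d < profile m x i"
    proof
      assume "real d < profile m x i"
      then obtain c where "SM n m L c" "card (c i) = card (c0 i) + 1"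
        using shift_up[OF assms(2) c0 i(1)] cd by auto
      then show False using i(2) SM_stable cd by force
    qed
    moreover have "\<not> profile m x i < real d"
    proof
      assume "profile m x i < real d"
      then obtain c where "SM n m L c" "card (c i) + 1 = card (c0 i)"
        using shift_down[OF assms(2) c0 i(1)] cd by auto
      then show False using i(2) SM_stable cd by force
    qed
    ultimately show ?thesis by simp
  qed
  have part2: "real d - 1 \<le> profile m x i \<and> profile m x i \<le> real d"
    if d1: "d \<ge> 1" and im: "i \<in> layer_minus n m L d" for d i
  proof -
    have i: "i < n" "{card (chi i) | chi. ind_stable n m L chi} = {d - 1, d}"
      using im unfolding layer_minus_def by auto
    have vals: "card (chi i) = d - 1 \<or> card (chi i) = d" if "ind_stable n m L chi" for chi
    proof -
      have "card (chi i) \<in> {card (chi i) | chi. ind_stable n m L chi}" using that by blast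
      then show ?thesis using i(2) by auto
    qed
    have rd: "real (d - 1) = real d - 1" using d1 by simp
    have up: "profile m x i \<le> real d"
    proof (rule ccontr)
      assume "\<not> profile m x i \<le> real d"
      then have gt: "real d < profile m x i" by simp
      consider "card (c0 i) = d - 1" | "card (c0 i) = d" using vals[OF st0] by blast
      then show False
      proof cases
        case 1
        then show False using P1(1)[OF assms(2) st0 i(1)] gt rd by simp
      next
        case 2
        then obtain c where c: "SM n m L c" "card (c i) = d + 1"
          using shift_up[OF assms(2) c0 i(1)] gt by auto
        then show False using vals[OF SM_stable[OF c(1)]] by simp
      qed
    qed
    have lo: "real d - 1 \<le> profile m x i"
    proof (rule ccontr)
      assume "\<not> real d - 1 \<le> profile m x i"
      then have lt: "profile m x i < real d - 1" by simp
      consider "card (c0 i) = d - 1" | "card (c0 i) = d" using vals[OF st0] by blast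
      then show False
      proof cases
        case 1
        then obtain c where c: "SM n m L c" "card (c i) + 1 = d - 1"
          using shift_down[OF assms(2) c0 i(1)] lt rd by auto
        then show False using vals[OF SM_stable[OF c(1)]] by auto
      next
        case 2
        then show False using P1(2)[OF assms(2) st0 i(1)] lt by simp
      qed
    qed
    show ?thesis using up lo by simp
  qed
  show ?thesis using part1 part2 by blast
qed

end
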